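(* Let $p \in (0,\tfrac12)$ and $c\in(0,1)$ be constants. Every (possibly randomized, possibly adaptive) algorithm that solves FT-Min$(k)$ on $n$ elements with high probability, for $1 \le k \le c\cdot n$, performs an expected number of comparisons of $\Omega(\frac{n}{k}\log n)$ (on some input instance), where the hidden constant depends only on $p$ and $c$.
   Context: FT-Min$(k)$ (fault-tolerant approximate minimum selection): the input is a set $S$ of $n$ distinct elements of a totally ordered set; the algorithm can access the order only through pairwise comparisons. A comparison of distinct $x,y$ reports "$x<y$" or "$x>y$", and reports the wrong relation with probability (at most) $p$, independently of all other comparisons (repeated comparisons of the same pair are also independent). The goal is to output one of the $k$ smallest elements of $S$. An algorithm solves it with high probability if on every input it outputs one of the $k$ smallest elements with probability at least $1-\frac1n$. Algorithms may be randomized and adaptive. *)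

theory Defs
  imports "HOL-Probability.Probability"
begin

text \<open>Model of a randomized adaptive noisy-comparison algorithm on the elements
  0,...,n-1.  The algorithm is a (countable-state) probabilistic automaton:
  states are natural numbers, the initial state is drawn from a pmf, and in each
  state the algorithm either outputs an element or compares two elements and then
  moves (possibly randomly, depending on the reported answer) to a new state.
  Internal randomness between comparisons is folded into these transitions.\<close>

datatype act = is_Cmp: Cmp nat nat "bool \<Rightarrow> nat pmf" | Out nat

text \<open>The input: a rk function which is a bijection of {0..<n}; element x has
  rk (position in the sorted order) rk x.  The true answer to the query
  "i < j ?" (ill-formed queries have answer False, i.e. carry no information).\<close>

definition true_answer :: "nat \<Rightarrow> (nat \<Rightarrow> nat) \<Rightarrow> nat \<Rightarrow> nat \<Rightarrow> bool" where
  "true_answer n rk i j = (i < n \<and> j < n \<and> i \<noteq> j \<and> rk i < rk j)"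

definition step_pmf ::
  "real \<Rightarrow> nat \<Rightarrow> (nat \<Rightarrow> nat) \<Rightarrow> (nat \<Rightarrow> act) \<Rightarrow> nat \<Rightarrow> nat pmf" where
  "step_pmf p n rk alg s =
     (case alg s of
        Cmp i j f \<Rightarrow> bind_pmf (bernoulli_pmf p) (\<lambda>err. f (err \<noteq> true_answer n rk i j))
      | Out x \<Rightarrow> return_pmf s)"

fun state_dist ::
  "real \<Rightarrow> nat \<Rightarrow> (nat \<Rightarrow> nat) \<Rightarrow> nat pmf \<Rightarrow> (nat \<Rightarrow> act) \<Rightarrow> nat \<Rightarrow> nat pmf" where
  "state_dist p n rk s0 alg 0 = s0"
| "state_dist p n rk s0 alg (Suc t) =
     bind_pmf (state_dist p n rk s0 alg t) (step_pmf p n rk alg)"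

text \<open>Expected number of comparisons: E[T] = sum over t of Pr[T > t]
  (infinite if the algorithm does not terminate with positive probability).\<close>

definition expected_comparisons ::
  "real \<Rightarrow> nat \<Rightarrow> (nat \<Rightarrow> nat) \<Rightarrow> nat pmf \<Rightarrow> (nat \<Rightarrow> act) \<Rightarrow> ennreal" where
  "expected_comparisons p n rk s0 alg =
     (\<Sum>t. ennreal (measure_pmf.prob (state_dist p n rk s0 alg t) {s. is_Cmp (alg s)}))"

definition success_prob ::
  "real \<Rightarrow> nat \<Rightarrow> nat \<Rightarrow> (nat \<Rightarrow> nat) \<Rightarrow> nat pmf \<Rightarrow> (nat \<Rightarrow> act) \<Rightarrow> real" where
  "success_prob p n k rk s0 alg =
     (SUP t. measure_pmf.prob (state_dist p n rk s0 alg t)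
               {s. \<exists>x. alg s = Out x \<and> x < n \<and> rk x < k})"

definition solves_ft_min_whp ::
  "real \<Rightarrow> nat \<Rightarrow> nat \<Rightarrow> nat pmf \<Rightarrow> (nat \<Rightarrow> act) \<Rightarrow> bool" where
  "solves_ft_min_whp p n k s0 alg =
     (\<forall>rk. bij_betw rk {..<n} {..<n} \<longrightarrow> success_prob p n k rk s0 alg \<ge> 1 - 1 / real n)"

end

theory Submission
  imports Defs
begin



definition dif :: "nat \<Rightarrow> (nat\<Rightarrow>nat) \<Rightarrow> (nat\<Rightarrow>nat) \<Rightarrow> (nat\<Rightarrow>act) \<Rightarrow> nat \<Rightarrow> bool" where
 "dif n rk1 rk2 alg s = (case alg s of Cmp i j f \<Rightarrow> true_answer n rk1 i j \<noteq> true_answer n rk2 i j | Out x \<Rightarrow> False)"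

fun jd :: "real \<Rightarrow> nat \<Rightarrow> (nat\<Rightarrow>nat) \<Rightarrow> nat pmf \<Rightarrow> (nat\<Rightarrow>act) \<Rightarrow> (nat\<Rightarrow>bool) \<Rightarrow> nat \<Rightarrow> (nat\<times>nat) pmf" where
  "jd p n rk s0 alg D 0 = map_pmf (\<lambda>s. (s,0)) s0"
| "jd p n rk s0 alg D (Suc t) = bind_pmf (jd p n rk s0 alg D t)
     (\<lambda>x. map_pmf (\<lambda>s'. (s', snd x + (if D (fst x) then 1 else 0))) (step_pmf p n rk alg (fst x)))"

lemma jd_fst: "map_pmf fst (jd p n rk s0 alg D t) = state_dist p n rk s0 alg t"
proof (induction t)
  case 0
  then show ?case by (simp add: pmf.map_comp o_def)
next
  case (Suc t)
  have "map_pmf fst (jd p n rk s0 alg D (Suc t)) =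
     bind_pmf (jd p n rk s0 alg D t) (\<lambda>x. step_pmf p n rk alg (fst x))"
    by (simp add: map_bind_pmf pmf.map_comp o_def)
  also have "\<dots> = bind_pmf (map_pmf fst (jd p n rk s0 alg D t)) (step_pmf p n rk alg)"
    by (simp add: bind_map_pmf)
  finally show ?case using Suc by simp
qed

lemma pmf_map_pair: "pmf (map_pmf (\<lambda>s'. (s', m)) M) (s', c') = (if c' = m then pmf M s' else 0)"
proof (cases "c' = m")
  case True
  then show ?thesis using pmf_map_inj'[of "\<lambda>s'. (s', m)" M s'] by (simp add: inj_def)
next
  case False
  then show ?thesis by (auto simp: pmf_eq_0_set_pmf)
qed

lemma step_ratio:
  assumes p: "0 < p" "p < 1/2"
  shows "(p/(1-p))^(if dif n rk1 rk2 alg s then 1 else 0) * pmf (step_pmf p n rk1 alg s) s'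
          \<le> pmf (step_pmf p n rk2 alg s) s'"
proof (cases "alg s")
  case (Cmp i j f)
  let ?a1 = "true_answer n rk1 i j" and ?a2 = "true_answer n rk2 i j"
  have pm: "pmf (step_pmf p n rk alg s) s' = pmf (f (True \<noteq> true_answer n rk i j)) s' * p
      + pmf (f (False \<noteq> true_answer n rk i j)) s' * (1-p)" for rk
    using p by (simp add: step_pmf_def Cmp pmf_bind)
  show ?thesis
  proof (cases "?a1 = ?a2")
    case True
    then show ?thesis by (simp add: dif_def Cmp pm)
  next
    case False
    then have d: "dif n rk1 rk2 alg s" by (simp add: dif_def Cmp)
    define X where "X = pmf (f (\<not> ?a1)) s'"
    define Y where "Y = pmf (f ?a1) s'"
    have X0: "X \<ge> 0" "Y \<ge> 0" by (auto simp: X_def Y_def)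
    have e1: "pmf (step_pmf p n rk1 alg s) s' = X * p + Y * (1-p)"
      unfolding pm X_def Y_def by simp
    have e2: "pmf (step_pmf p n rk2 alg s) s' = Y * p + X * (1-p)"
      unfolding pm X_def Y_def using False by (cases ?a1) auto
    have r1: "p/(1-p) * (X*p) \<le> X * (1-p)"
    proof -
      have pp: "p * p \<le> (1-p) * (1-p)" using p by (intro mult_mono) auto
      have "p/(1-p) * p \<le> 1 - p" using p pp by (simp add: field_simps)
      then show ?thesis using X0 by (metis mult.assoc mult.commute mult_left_mono)
    qed
    have r2: "p/(1-p) * (Y*(1-p)) = Y * p" using p by (simp add: field_simps)
    have "p/(1-p) * (X * p + Y * (1-p)) = p/(1-p) * (X*p) + p/(1-p) * (Y*(1-p))"
      by (simp add: distrib_left)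
    then show ?thesis unfolding e1 e2 using d r1 r2 by simp
  qed
next
  case (Out x)
  then show ?thesis by (simp add: dif_def step_pmf_def)
qed

lemma jd_ratio:
  fixes n :: nat and rk1 rk2 :: "nat \<Rightarrow> nat" and alg :: "nat \<Rightarrow> act"
  assumes p: "0 < p" "p < 1/2"
  defines "D \<equiv> dif n rk1 rk2 alg"
  shows "(p/(1-p))^c * pmf (jd p n rk1 s0 alg D t) (s,c) \<le> pmf (jd p n rk2 s0 alg D t) (s,c)"
proof (induction t arbitrary: s c)
  case 0
  have r: "(p/(1-p))^c \<le> 1" using p by (intro power_le_one) auto
  have "(p/(1-p))^c * pmf (map_pmf (\<lambda>s. (s, 0::nat)) s0) (s, c) \<le> 1 * pmf (map_pmf (\<lambda>s. (s, 0::nat)) s0) (s, c)"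
    using r by (intro mult_right_mono) auto
  then show ?case by simp
next
  case (Suc t)
  define r where "r = p/(1-p)"
  have r0: "r \<ge> 0" using p by (simp add: r_def)
  define J1 where "J1 = jd p n rk1 s0 alg D t"
  define J2 where "J2 = jd p n rk2 s0 alg D t"
  define K where "K = (\<lambda>rk (x::nat\<times>nat). map_pmf (\<lambda>s'. (s', snd x + (if D (fst x) then 1 else 0))) (step_pmf p n rk alg (fst x)))"
  have e: "jd p n rk s0 alg D (Suc t) = bind_pmf (jd p n rk s0 alg D t) (K rk)" for rk
    by (simp add: K_def)
  have pw: "r^c * (pmf J1 x * pmf (K rk1 x) (s,c)) \<le> pmf J2 x * pmf (K rk2 x) (s,c)" for x
  proof -
    obtain s1 c1 where x: "x = (s1, c1)" by force
    define d where "d = (if D s1 then 1 else 0::nat)"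
    show ?thesis
    proof (cases "c = c1 + d")
      case True
      have IH: "r^c1 * pmf J1 x \<le> pmf J2 x" using Suc x by (simp add: J1_def J2_def r_def)
      have st: "r^d * pmf (step_pmf p n rk1 alg s1) s \<le> pmf (step_pmf p n rk2 alg s1) s"
        using step_ratio[OF p, of n rk1 rk2 alg s1 s] by (simp add: d_def D_def r_def)
      have "r^c * (pmf J1 x * pmf (K rk1 x) (s,c)) = (r^c1 * pmf J1 x) * (r^d * pmf (step_pmf p n rk1 alg s1) s)"
        using True by (simp add: K_def x d_def pmf_map_pair power_add)
      also have "\<dots> \<le> pmf J2 x * pmf (step_pmf p n rk2 alg s1) s"
        using IH st r0 by (intro mult_mono) auto
      also have "\<dots> = pmf J2 x * pmf (K rk2 x) (s,c)"
        using True by (simp add: K_def x d_def pmf_map_pair)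
      finally show ?thesis .
    next
      case False
      then show ?thesis by (simp add: K_def x d_def pmf_map_pair)
    qed
  qed
  have "ennreal (r^c * pmf (jd p n rk1 s0 alg D (Suc t)) (s,c))
      = ennreal (r^c) * (\<integral>\<^sup>+x. pmf (K rk1 x) (s,c) \<partial>measure_pmf J1)"
    using r0 unfolding e J1_def by (simp add: ennreal_pmf_bind ennreal_mult)
  also have "\<dots> = (\<integral>\<^sup>+x. ennreal (r^c) * pmf (K rk1 x) (s,c) \<partial>measure_pmf J1)"
    by (simp add: nn_integral_cmult)
  also have "\<dots> = (\<integral>\<^sup>+x. ennreal (pmf J1 x) * (ennreal (r^c) * pmf (K rk1 x) (s,c)) \<partial>count_space UNIV)"
    by (simp add: nn_integral_measure_pmf)
  also have "\<dots> \<le> (\<integral>\<^sup>+x. ennreal (pmf J2 x) * ennreal (pmf (K rk2 x) (s,c)) \<partial>count_space UNIV)"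
  proof (intro nn_integral_mono)
    fix x
    have "ennreal (pmf J1 x) * (ennreal (r^c) * ennreal (pmf (K rk1 x) (s,c)))
        = ennreal (r^c * (pmf J1 x * pmf (K rk1 x) (s,c)))"
      using r0 by (simp add: ennreal_mult mult_ac)
    also have "\<dots> \<le> ennreal (pmf J2 x * pmf (K rk2 x) (s,c))"
      using pw by (rule ennreal_leI)
    also have "\<dots> = ennreal (pmf J2 x) * ennreal (pmf (K rk2 x) (s,c))"
      by (simp add: ennreal_mult)
    finally show "ennreal (pmf J1 x) * (ennreal (r^c) * ennreal (pmf (K rk1 x) (s,c)))
        \<le> ennreal (pmf J2 x) * ennreal (pmf (K rk2 x) (s,c))" .
  qed
  also have "\<dots> = ennreal (pmf (jd p n rk2 s0 alg D (Suc t)) (s,c))"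
    unfolding e J2_def by (simp add: ennreal_pmf_bind nn_integral_measure_pmf)
  finally show ?case using r0 by (simp add: r_def ennreal_le_iff)
qed

lemma jd_set_ratio:
  fixes n :: nat and rk1 rk2 :: "nat \<Rightarrow> nat" and alg :: "nat \<Rightarrow> act"
  assumes p: "0 < p" "p < 1/2" and A: "A \<subseteq> {x. snd x \<le> m}"
  defines "D \<equiv> dif n rk1 rk2 alg"
  shows "(p/(1-p))^m * measure_pmf.prob (jd p n rk1 s0 alg D t) A \<le> measure_pmf.prob (jd p n rk2 s0 alg D t) A"
proof -
  define r where "r = p/(1-p)"
  have r0: "r \<ge> 0" "r \<le> 1" using p by (auto simp: r_def field_simps)
  define J1 where "J1 = jd p n rk1 s0 alg D t"
  define J2 where "J2 = jd p n rk2 s0 alg D t"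
  have "ennreal (r^m) * emeasure J1 A = ennreal (r^m) * (\<integral>\<^sup>+x. indicator A x \<partial>measure_pmf J1)"
    by simp
  also have "\<dots> = (\<integral>\<^sup>+x. ennreal (pmf J1 x) * (ennreal (r^m) * indicator A x) \<partial>count_space UNIV)"
    by (simp add: nn_integral_cmult[symmetric] nn_integral_measure_pmf mult_ac)
  also have "\<dots> \<le> (\<integral>\<^sup>+x. ennreal (pmf J2 x) * indicator A x \<partial>count_space UNIV)"
  proof (intro nn_integral_mono)
    fix x :: "nat \<times> nat"
    show "ennreal (pmf J1 x) * (ennreal (r^m) * indicator A x) \<le> ennreal (pmf J2 x) * indicator A x"
    proof (cases "x \<in> A")
      case True
      obtain s c where x: "x = (s,c)" by force
      have cm: "c \<le> m" using A True x by auto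
      have "r^m * pmf J1 x \<le> r^c * pmf J1 x"
        using r0 cm by (intro mult_right_mono power_decreasing) auto
      also have "\<dots> \<le> pmf J2 x" using jd_ratio[OF p, where c=c and s=s] x
        by (simp add: J1_def J2_def D_def r_def)
      finally have "ennreal (r^m * pmf J1 x) \<le> ennreal (pmf J2 x)" by (rule ennreal_leI)
      then show ?thesis using True r0 by (simp add: ennreal_mult mult_ac)
    qed simp
  qed
  also have "\<dots> = emeasure J2 A"
    by (simp add: nn_integral_measure_pmf[symmetric])
  finally have "ennreal (r^m) * emeasure J1 A \<le> emeasure J2 A" .
  then have "ennreal (r^m * measure_pmf.prob J1 A) \<le> ennreal (measure_pmf.prob J2 A)"
    using r0 by (simp add: measure_pmf.emeasure_eq_measure ennreal_mult)
  then show ?thesis using r0 by (simp add: ennreal_le_iff r_def J1_def J2_def)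
qed

lemma jd_count:
  "(\<integral>\<^sup>+x. ennreal (real (snd x)) \<partial>measure_pmf (jd p n rk s0 alg D t))
    = (\<Sum>t'<t. ennreal (measure_pmf.prob (state_dist p n rk s0 alg t') {s. D s}))"
proof (induction t)
  case 0
  then show ?case by simp
next
  case (Suc t)
  define J where "J = jd p n rk s0 alg D t"
  have "(\<integral>\<^sup>+x. ennreal (real (snd x)) \<partial>measure_pmf (jd p n rk s0 alg D (Suc t)))
     = (\<integral>\<^sup>+x. ennreal (real (snd x)) + indicator {x. D (fst x)} x \<partial>measure_pmf J)"
    by (auto simp: J_def measure_pmf.emeasure_space_1 intro!: nn_integral_cong split: split_indicator)
  also have "\<dots> = (\<integral>\<^sup>+x. ennreal (real (snd x)) \<partial>measure_pmf J) + emeasure J {x. D (fst x)}"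
    by (subst nn_integral_add) auto
  also have "emeasure J {x. D (fst x)} = emeasure (map_pmf fst J) {s. D s}"
    by (simp add: vimage_def)
  also have "\<dots> = ennreal (measure_pmf.prob (state_dist p n rk s0 alg t) {s. D s})"
    by (simp add: J_def jd_fst measure_pmf.emeasure_eq_measure)
  finally show ?case using Suc by (simp add: J_def)
qed

lemma jd_markov:
  "emeasure (measure_pmf (jd p n rk s0 alg D t)) {x. m + 1 \<le> snd x} * of_nat (m+1)
    \<le> (\<Sum>t'<t. ennreal (measure_pmf.prob (state_dist p n rk s0 alg t') {s. D s}))"
proof -
  define J where "J = jd p n rk s0 alg D t"
  have "emeasure (measure_pmf J) {x. m + 1 \<le> snd x} * of_nat (m+1)
     = (\<integral>\<^sup>+x. of_nat (m+1) * indicator {x. m + 1 \<le> snd x} x \<partial>measure_pmf J)"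
    by (simp add: nn_integral_cmult_indicator mult.commute)
  also have "\<dots> \<le> (\<integral>\<^sup>+x. ennreal (real (snd x)) \<partial>measure_pmf J)"
  proof (intro nn_integral_mono)
    fix x :: "nat \<times> nat"
    have "m + 1 \<le> snd x \<Longrightarrow> ennreal (real (m+1)) \<le> ennreal (real (snd x))"
      by (intro ennreal_leI) simp
    then show "of_nat (m+1) * indicator {x. m + 1 \<le> snd x} x \<le> ennreal (real (snd x))"
      by (auto split: split_indicator simp: ennreal_of_nat_eq_real_of_nat)
  qed
  finally show ?thesis by (simp add: J_def jd_count)
qed

lemma key:
  fixes n :: nat and rk1 rk2 :: "nat \<Rightarrow> nat" and alg :: "nat \<Rightarrow> act"
  assumes p: "0 < p" "p < 1/2"
  shows "(p/(1-p))^m * (measure_pmf.prob (state_dist p n rk1 s0 alg t) Ob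
      - (\<Sum>t'<t. measure_pmf.prob (state_dist p n rk1 s0 alg t') {s. dif n rk1 rk2 alg s}) / real (m+1))
    \<le> measure_pmf.prob (state_dist p n rk2 s0 alg t) Ob"
proof -
  define D where "D = dif n rk1 rk2 alg"
  define J1 where "J1 = jd p n rk1 s0 alg D t"
  define J2 where "J2 = jd p n rk2 s0 alg D t"
  define E where "E = (\<Sum>t'<t. measure_pmf.prob (state_dist p n rk1 s0 alg t') {s. D s})"
  define A where "A = {x::nat\<times>nat. fst x \<in> Ob \<and> snd x \<le> m}"
  define B where "B = {x::nat\<times>nat. m + 1 \<le> snd x}"
  define r where "r = p/(1-p)"
  have r0: "r \<ge> 0" using p by (auto simp: r_def)
  have m1: "measure_pmf.prob (state_dist p n rk1 s0 alg t) Ob = measure_pmf.prob J1 (fst -` Ob)"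
    unfolding J1_def by (metis jd_fst measure_map_pmf)
  have m2: "measure_pmf.prob (state_dist p n rk2 s0 alg t) Ob = measure_pmf.prob J2 (fst -` Ob)"
    unfolding J2_def by (metis jd_fst measure_map_pmf)
  have "measure_pmf.prob J1 (fst -` Ob) \<le> measure_pmf.prob J1 (A \<union> B)"
    by (intro measure_pmf.finite_measure_mono) (auto simp: A_def B_def)
  also have "\<dots> \<le> measure_pmf.prob J1 A + measure_pmf.prob J1 B"
    by (rule measure_Un_le) auto
  finally have s1: "measure_pmf.prob J1 (fst -` Ob) \<le> measure_pmf.prob J1 A + measure_pmf.prob J1 B" .
  have "ennreal (measure_pmf.prob J1 B * real (m+1)) \<le> ennreal E"
    using jd_markov[of p n rk1 s0 alg D t m]
    by (simp add: J1_def B_def E_def measure_pmf.emeasure_eq_measure ennreal_of_nat_eq_real_of_nat ennreal_mult)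
  then have s2: "measure_pmf.prob J1 B * real (m+1) \<le> E"
    by (simp add: E_def ennreal_le_iff sum_nonneg)
  then have s2': "measure_pmf.prob J1 B \<le> E / real (m+1)"
    by (simp add: field_simps)
  have s3: "r^m * measure_pmf.prob J1 A \<le> measure_pmf.prob J2 A"
    unfolding A_def J1_def J2_def D_def r_def by (rule jd_set_ratio[OF p]) auto
  have s4: "measure_pmf.prob J2 A \<le> measure_pmf.prob J2 (fst -` Ob)"
    by (intro measure_pmf.finite_measure_mono) (auto simp: A_def)
  have "r^m * (measure_pmf.prob J1 (fst -` Ob) - E / real (m+1)) \<le> r^m * measure_pmf.prob J1 A"
    using s1 s2' r0 by (intro mult_left_mono) auto
  then show ?thesis using s3 s4 m1 m2 by (simp add: r_def E_def D_def)
qed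

lemma absorb_mono:
  assumes Ob: "\<And>s. s \<in> Ob \<Longrightarrow> \<not> is_Cmp (alg s)"
  shows "measure_pmf.prob (state_dist p n rk s0 alg t) Ob \<le> measure_pmf.prob (state_dist p n rk s0 alg (t+d)) Ob"
proof (induction d)
  case 0
  then show ?case by simp
next
  case (Suc d)
  define M where "M = state_dist p n rk s0 alg (t+d)"
  have "emeasure (measure_pmf M) Ob = (\<integral>\<^sup>+x. indicator Ob x \<partial>measure_pmf M)" by simp
  also have "\<dots> \<le> (\<integral>\<^sup>+x. emeasure (measure_pmf (step_pmf p n rk alg x)) Ob \<partial>measure_pmf M)"
  proof (intro nn_integral_mono)
    fix x
    show "indicator Ob x \<le> emeasure (measure_pmf (step_pmf p n rk alg x)) Ob"
    proof (cases "x \<in> Ob")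
      case True
      then obtain y where "alg x = Out y" using Ob[OF True] by (cases "alg x") auto
      then show ?thesis using True by (simp add: step_pmf_def)
    qed simp
  qed
  also have "\<dots> = emeasure (measure_pmf (state_dist p n rk s0 alg (t + Suc d))) Ob"
    by (simp add: M_def)
  finally have "emeasure (measure_pmf M) Ob \<le> emeasure (measure_pmf (state_dist p n rk s0 alg (t + Suc d))) Ob" .
  then have "measure_pmf.prob M Ob \<le> measure_pmf.prob (state_dist p n rk s0 alg (t + Suc d)) Ob"
    by (simp add: measure_pmf.emeasure_eq_measure)
  then show ?case using Suc by (simp add: M_def)
qed

lemma absorb_mono':
  assumes Ob: "\<And>s. s \<in> Ob \<Longrightarrow> \<not> is_Cmp (alg s)" and "t \<le> t'"
  shows "measure_pmf.prob (state_dist p n rk s0 alg t) Ob \<le> measure_pmf.prob (state_dist p n rk s0 alg t') Ob"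
  using absorb_mono[OF Ob, where d="t' - t" and t=t] assms(2) by simp

lemma success_bound:
  assumes Ob: "\<And>s. s \<in> Ob \<Longrightarrow> \<not> is_Cmp (alg s)"
    and disj: "\<And>s x. s \<in> Ob \<Longrightarrow> alg s = Out x \<Longrightarrow> x < n \<Longrightarrow> rk x < k \<Longrightarrow> False"
  shows "success_prob p n k rk s0 alg \<le> 1 - measure_pmf.prob (state_dist p n rk s0 alg t) Ob"
  unfolding success_prob_def
proof (rule cSUP_least)
  fix t'
  define G where "G = {s. \<exists>x. alg s = Out x \<and> x < n \<and> rk x < k}"
  define t2 where "t2 = max t t'"
  have G: "\<And>s. s \<in> G \<Longrightarrow> \<not> is_Cmp (alg s)" by (auto simp: G_def)
  have "measure_pmf.prob (state_dist p n rk s0 alg t') G \<le> measure_pmf.prob (state_dist p n rk s0 alg t2) G"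
    unfolding t2_def using G by (intro absorb_mono') auto
  moreover have "measure_pmf.prob (state_dist p n rk s0 alg t) Ob \<le> measure_pmf.prob (state_dist p n rk s0 alg t2) Ob"
    unfolding t2_def using Ob by (intro absorb_mono') auto
  moreover have "measure_pmf.prob (state_dist p n rk s0 alg t2) G + measure_pmf.prob (state_dist p n rk s0 alg t2) Ob
      = measure_pmf.prob (state_dist p n rk s0 alg t2) (G \<union> Ob)"
    using disj by (intro measure_pmf.finite_measure_Union[symmetric]) (auto simp: G_def)
  moreover have "measure_pmf.prob (state_dist p n rk s0 alg t2) (G \<union> Ob) \<le> 1"
    by (rule measure_pmf.prob_le_1)
  ultimately have "measure_pmf.prob (state_dist p n rk s0 alg t') G
      \<le> 1 - measure_pmf.prob (state_dist p n rk s0 alg t) Ob" by linarith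
  then show "measure_pmf.prob (state_dist p n rk s0 alg t') {s. \<exists>x. alg s = Out x \<and> x < n \<and> rk x < k}
      \<le> 1 - measure_pmf.prob (state_dist p n rk s0 alg t) Ob"
    by (simp add: G_def)
qed simp



definition rot :: "nat \<Rightarrow> nat \<Rightarrow> nat \<Rightarrow> nat \<Rightarrow> nat" where
  "rot lo mid hi x = (if lo \<le> x \<and> x < mid then x + (hi - mid) else if mid \<le> x \<and> x < hi then x - (mid - lo) else x)"

lemma rot_bij:
  assumes "lo \<le> mid" "mid \<le> hi" "hi \<le> n"
  shows "bij_betw (rot lo mid hi) {..<n} {..<n}"
proof -
  have inj: "inj_on (rot lo mid hi) {..<n}"
    unfolding inj_on_def rot_def using assms by auto
  have sub: "rot lo mid hi ` {..<n} \<subseteq> {..<n}"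
    unfolding rot_def using assms by auto
  have "rot lo mid hi ` {..<n} = {..<n}"
    by (rule endo_inj_surj[OF _ sub inj]) simp
  then show ?thesis using inj by (simp add: bij_betw_def)
qed

lemma rot_mono:
  assumes "lo \<le> mid" "mid \<le> hi" "\<not> (mid \<le> x \<and> x < hi)" "\<not> (mid \<le> y \<and> y < hi)" "x < y"
  shows "rot lo mid hi x < rot lo mid hi y"
  unfolding rot_def using assms by auto

lemma rot_iff:
  assumes "lo \<le> mid" "mid \<le> hi" "\<not> (mid \<le> x \<and> x < hi)" "\<not> (mid \<le> y \<and> y < hi)"
  shows "rot lo mid hi x < rot lo mid hi y \<longleftrightarrow> x < y"
  using rot_mono[OF assms(1,2,3,4)] rot_mono[OF assms(1,2,4,3)]
  by (metis less_asym' nat_neq_iff)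

definition inv_blk :: "(nat \<Rightarrow> act) \<Rightarrow> nat \<Rightarrow> nat \<Rightarrow> nat set" where
  "inv_blk alg a b = {s. \<exists>i j f. alg s = Cmp i j f \<and> (a \<le> i \<and> i < b \<or> a \<le> j \<and> j < b)}"

lemma blk_div:
  fixes k b x :: nat
  assumes "k * (b+1) \<le> x" "x < k * (b+2)"
  shows "b = x div k - 1"
proof -
  have k: "k > 0" using assms by (cases k) auto
  have "x div k = b + 1"
    using assms k by (metis Suc_eq_plus1 add_2_eq_Suc' div_nat_eqI mult.commute)
  then show ?thesis by simp
qed

lemma blk_card:
  fixes k :: nat
  shows "(\<Sum>b<J. indicator (inv_blk alg (k*(b+1)) (k*(b+2))) s :: real) \<le> 2 * indicator {s. is_Cmp (alg s)} s"
proof -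
  have e: "(\<Sum>b<J. indicator (inv_blk alg (k*(b+1)) (k*(b+2))) s :: real)
      = (\<Sum>b<J. indicator {b. s \<in> inv_blk alg (k*(b+1)) (k*(b+2))} b)"
    by (intro sum.cong) (auto split: split_indicator)
  also have "\<dots> = real (card ({..<J} \<inter> {b. s \<in> inv_blk alg (k*(b+1)) (k*(b+2))}))"
    unfolding indicator_def by (subst sum_of_bool_eq) auto
  finally have e2: "(\<Sum>b<J. indicator (inv_blk alg (k*(b+1)) (k*(b+2))) s :: real) = real (card ({..<J} \<inter> {b. s \<in> inv_blk alg (k*(b+1)) (k*(b+2))}))" .
  show ?thesis
  proof (cases "alg s")
    case (Cmp i j f)
    have sub: "{..<J} \<inter> {b. s \<in> inv_blk alg (k*(b+1)) (k*(b+2))} \<subseteq> {i div k - 1, j div k - 1}"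
    proof
      fix b assume "b \<in> {..<J} \<inter> {b. s \<in> inv_blk alg (k*(b+1)) (k*(b+2))}"
      then have "k*(b+1) \<le> i \<and> i < k*(b+2) \<or> k*(b+1) \<le> j \<and> j < k*(b+2)"
        by (auto simp: inv_blk_def Cmp)
      then show "b \<in> {i div k - 1, j div k - 1}" using blk_div by blast
    qed
    have "card ({..<J} \<inter> {b. s \<in> inv_blk alg (k*(b+1)) (k*(b+2))}) \<le> card {i div k - 1, j div k - 1}"
      by (rule card_mono[OF _ sub]) simp
    also have "\<dots> \<le> 2" by (cases "i div k - 1 = j div k - 1") auto
    finally show ?thesis using e2 Cmp by simp
  next
    case (Out x)
    then have "{..<J} \<inter> {b. s \<in> inv_blk alg (k*(b+1)) (k*(b+2))} = {}"
      by (auto simp: inv_blk_def)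
    then show ?thesis using e2 by simp
  qed
qed

lemma blk_sum_prob:
  fixes k :: nat and M :: "nat pmf"
  shows "(\<Sum>b<J. measure_pmf.prob M (inv_blk alg (k*(b+1)) (k*(b+2)))) \<le> 2 * measure_pmf.prob M {s. is_Cmp (alg s)}"
proof -
  have "(\<Sum>b<J. measure_pmf.prob M (inv_blk alg (k*(b+1)) (k*(b+2))))
     = (\<Sum>b<J. measure_pmf.expectation M (indicator (inv_blk alg (k*(b+1)) (k*(b+2)))))"
    by simp
  also have "\<dots> = measure_pmf.expectation M (\<lambda>s. \<Sum>b<J. indicator (inv_blk alg (k*(b+1)) (k*(b+2))) s)"
    by (rule Bochner_Integration.integral_sum[symmetric]) (auto intro!: measure_pmf.integrable_const_bound[where B=1])
  also have "\<dots> \<le> measure_pmf.expectation M (\<lambda>s. 2 * indicator {s. is_Cmp (alg s)} s)"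
    by (intro integral_mono blk_card Bochner_Integration.integrable_sum integrable_mult_right)
       (auto intro!: measure_pmf.integrable_const_bound[where B=1])
  also have "\<dots> = 2 * measure_pmf.prob M {s. is_Cmp (alg s)}"
    by simp
  finally show ?thesis .
qed


lemma final_ineq:
  fixes n :: nat and rk1 rk2 :: "nat \<Rightarrow> nat" and alg :: "nat \<Rightarrow> act"
  assumes p: "0 < p" "p < 1/2" and bij: "bij_betw rk2 {..<n} {..<n}"
    and sv: "solves_ft_min_whp p n k s0 alg"
    and Ob: "\<And>s. s \<in> Ob \<Longrightarrow> \<not> is_Cmp (alg s)"
    and disj: "\<And>s x. s \<in> Ob \<Longrightarrow> alg s = Out x \<Longrightarrow> x < n \<Longrightarrow> rk2 x < k \<Longrightarrow> False"
  shows "(p/(1-p))^m * (measure_pmf.prob (state_dist p n rk1 s0 alg t) Ob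
      - (\<Sum>t'<t. measure_pmf.prob (state_dist p n rk1 s0 alg t') {s. dif n rk1 rk2 alg s}) / real (m+1))
    \<le> 1 / real n"
proof -
  have "success_prob p n k rk2 s0 alg \<ge> 1 - 1 / real n"
    using sv bij by (simp add: solves_ft_min_whp_def)
  moreover have "success_prob p n k rk2 s0 alg \<le> 1 - measure_pmf.prob (state_dist p n rk2 s0 alg t) Ob"
    by (rule success_bound[OF Ob disj]) auto
  ultimately show ?thesis using key[OF p, of m n rk1 s0 alg t Ob rk2] by linarith
qed

lemma pow_bound:
  fixes p a :: real and n m :: nat
  assumes p: "0 < p" "p < 1/2" and a: "a > 0" and n: "n > 0"
    and le: "(p/(1-p))^m * a \<le> 1 / real n"
  shows "ln (real n * a) \<le> real m * ln ((1-p)/p)"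
proof -
  have r: "p/(1-p) > 0" using p by auto
  have "ln ((p/(1-p))^m * a) \<le> ln (1 / real n)"
    using le r a n by (subst ln_le_cancel_iff) auto
  moreover have "ln ((p/(1-p))^m * a) = real m * ln (p/(1-p)) + ln a"
    using r a p by (simp add: ln_mult ln_realpow)
  moreover have "real m * ln (p/(1-p)) = - (real m * ln ((1-p)/p))"
    using p by (simp add: ln_div algebra_simps)
  moreover have "ln (1 / real n) = - ln (real n)" using n by (simp add: ln_div)
  moreover have "ln (real n * a) = ln (real n) + ln a" using n a by (simp add: ln_mult)
  ultimately show ?thesis by linarith
qed

lemma dif_rot:
  assumes "mid \<le> hi" "dif n id (rot 0 mid hi) alg s"
  shows "s \<in> inv_blk alg mid hi"
proof (cases "alg s")
  case (Cmp i j f)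
  show ?thesis
  proof (rule ccontr)
    assume "s \<notin> inv_blk alg mid hi"
    then have "\<not> (mid \<le> i \<and> i < hi)" "\<not> (mid \<le> j \<and> j < hi)" by (auto simp: inv_blk_def Cmp)
    then have "rot 0 mid hi i < rot 0 mid hi j \<longleftrightarrow> i < j" using rot_iff[of 0 mid hi i j] assms(1) by simp
    then show False using assms(2) unfolding dif_def Cmp true_answer_def by auto
  qed
next
  case (Out x)
  then show ?thesis using assms by (simp add: dif_def)
qed

lemma dif_cmp: "dif n rk1 rk2 alg s \<Longrightarrow> is_Cmp (alg s)"
  by (cases "alg s") (auto simp: dif_def)



lemma good_time:
  assumes sv: "solves_ft_min_whp p n k s0 alg" and n: "n \<ge> 8"
  shows "\<exists>t. measure_pmf.prob (state_dist p n id s0 alg t) {s. \<exists>x. alg s = Out x \<and> x < n \<and> x < k} \<ge> 3/4"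
proof -
  have "success_prob p n k id s0 alg \<ge> 1 - 1 / real n"
    using sv by (simp add: solves_ft_min_whp_def)
  moreover have "1 / real n \<le> 1/8" using n by (simp add: field_simps)
  ultimately have "3/4 < success_prob p n k id s0 alg" by linarith
  then have "3/4 < (SUP t. measure_pmf.prob (state_dist p n id s0 alg t) {s. \<exists>x. alg s = Out x \<and> x < n \<and> x < k})"
    by (simp add: success_prob_def)
  then obtain t where "3/4 < measure_pmf.prob (state_dist p n id s0 alg t) {s. \<exists>x. alg s = Out x \<and> x < n \<and> x < k}"
    by (subst (asm) less_cSUP_iff) (auto intro: bdd_aboveI[where M=1])
  then show ?thesis by (intro exI[of _ t]) simp
qed

lemma case1:
  fixes n k :: nat
  assumes p: "0 < p" "p < 1/2" and n: "n \<ge> 8" and k: "1 \<le> k" "4 * k \<le> n"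
    and sv: "solves_ft_min_whp p n k s0 alg"
    and sa: "summable (\<lambda>t. measure_pmf.prob (state_dist p n id s0 alg t) {s. is_Cmp (alg s)})"
  shows "ln (real n / 2) \<le> (16 * (\<Sum>t. measure_pmf.prob (state_dist p n id s0 alg t) {s. is_Cmp (alg s)}) * real k / real n + 1) * ln ((1-p)/p)"
proof -
  define pr where "pr t A = measure_pmf.prob (state_dist p n id s0 alg t) A" for t A
  define a where "a t = pr t {s. is_Cmp (alg s)}" for t
  define Tr where "Tr = suminf a"
  define L where "L = ln ((1-p)/p)"
  have L: "L > 0" using p unfolding L_def by (subst ln_gt_zero_iff) (auto simp: field_simps)
  have sa': "summable a" using sa by (simp add: a_def[abs_def] pr_def)
  define I where "I b = inv_blk alg (k*(b+1)) (k*(b+2))" for b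
  define e where "e b = (\<Sum>t. pr t (I b))" for b
  have se: "summable (\<lambda>t. pr t (I b))" for b
  proof (rule summable_comparison_test'[OF sa'])
    fix t :: nat
    have "pr t (I b) \<le> a t" unfolding a_def pr_def
      by (intro measure_pmf.finite_measure_mono) (auto simp: I_def inv_blk_def)
    then show "norm (pr t (I b)) \<le> a t" by (simp add: pr_def)
  qed
  define J where "J = (n - k) div k"
  have J1: "J \<ge> 1"
  proof -
    have "k div k \<le> (n - k) div k" using k by (intro div_le_mono) linarith
    then show ?thesis using k by (simp add: J_def)
  qed
  have Jk: "J * k \<le> n - k" unfolding J_def by (rule div_times_less_eq_dividend)
  have Jk2: "2 * real J * real k \<ge> real n"
  proof -
    have "n - k < J * k + k" unfolding J_def using k
      by (metis add_less_cancel_left div_mult_mod_eq mod_less_divisor less_le_trans zero_less_one)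
    then have "n < J * k + 2 * k" by linarith
    then have "real n < real J * real k + 2 * real k" by (metis of_nat_add of_nat_mult of_nat_less_iff of_nat_numeral)
    moreover have "4 * real k \<le> real n" using k by linarith
    ultimately show ?thesis by linarith
  qed
  have sumle: "(\<Sum>b<J. e b) \<le> 2 * Tr"
  proof -
    have "(\<Sum>b<J. e b) = (\<Sum>t. \<Sum>b<J. pr t (I b))"
      unfolding e_def by (rule suminf_sum[symmetric]) (use se in auto)
    also have "\<dots> \<le> (\<Sum>t. 2 * a t)"
    proof (rule suminf_le)
      fix t show "(\<Sum>b<J. pr t (I b)) \<le> 2 * a t"
        unfolding pr_def a_def I_def by (rule blk_sum_prob)
    qed (use se sa' in \<open>auto intro: summable_sum summable_mult\<close>)
    also have "\<dots> = 2 * Tr" unfolding Tr_def by (rule suminf_mult[OF sa'])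
    finally show ?thesis .
  qed
  obtain b where b: "b < J" "\<And>b'. b' < J \<Longrightarrow> e b \<le> e b'"
  proof -
    have "0 \<in> {..<J}" using J1 by simp
    then have "{..<J} \<noteq> {}" by blast
    then have "Min (e ` {..<J}) \<in> e ` {..<J}" by (intro Min_in) auto
    then obtain b where "b < J" "e b = Min (e ` {..<J})" by auto
    then show ?thesis using that by auto
  qed
  have "real J * e b \<le> (\<Sum>b<J. e b)"
    using sum_bounded_below[of "{..<J}" "e b" e] b(2) by simp
  then have Jeb: "real J * e b \<le> 2 * Tr" using sumle by linarith
  have eb0: "e b \<ge> 0" unfolding e_def by (intro suminf_nonneg se) (simp add: pr_def)
  define mid where "mid = k * (b+1)"
  define hi where "hi = k * (b+2)"
  have hin: "hi \<le> n"
  proof -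
    have "b + 1 \<le> J" using b(1) by simp
    then have "k * (b+1) \<le> k * J" by (rule mult_left_mono) simp
    then show ?thesis using Jk k unfolding hi_def by (simp add: algebra_simps)
  qed
  have midhi: "0 \<le> mid" "mid \<le> hi" by (auto simp: mid_def hi_def)
  define rk2 where "rk2 = rot 0 mid hi"
  have bij: "bij_betw rk2 {..<n} {..<n}" unfolding rk2_def by (rule rot_bij) (use midhi hin in auto)
  define Ob where "Ob = {s. \<exists>x. alg s = Out x \<and> x < n \<and> x < k}"
  obtain t where t: "pr t Ob \<ge> 3/4" using good_time[OF sv n] by (auto simp: pr_def Ob_def)
  define E where "E = (\<Sum>t'<t. pr t' {s. dif n id rk2 alg s})"
  have Eeb: "E \<le> e b"
  proof -
    have "E \<le> (\<Sum>t'<t. pr t' (I b))"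
      unfolding E_def
    proof (intro sum_mono)
      fix t' show "pr t' {s. dif n id rk2 alg s} \<le> pr t' (I b)"
        unfolding pr_def using dif_rot[OF midhi(2)] 
        by (intro measure_pmf.finite_measure_mono) (auto simp: I_def rk2_def mid_def hi_def)
    qed
    also have "\<dots> \<le> e b" unfolding e_def by (rule sum_le_suminf[OF se]) (auto simp: pr_def)
    finally show ?thesis .
  qed
  define m where "m = nat \<lceil>4 * e b\<rceil>"
  have m1: "4 * e b \<le> real m" unfolding m_def by linarith
  have m2: "real m < 4 * e b + 1" unfolding m_def using eb0 by linarith
  have "E / real (m+1) \<le> 1/4"
    using Eeb m1 eb0 by (simp add: field_simps)
  then have half: "1/2 \<le> pr t Ob - E / real (m+1)" using t by linarith
  have fi: "(p/(1-p))^m * (pr t Ob - E / real (m+1)) \<le> 1 / real n"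
    unfolding pr_def E_def
  proof (rule final_ineq[OF p bij sv])
    show "\<And>s. s \<in> Ob \<Longrightarrow> \<not> is_Cmp (alg s)" by (auto simp: Ob_def)
    fix s x assume "s \<in> Ob" "alg s = Out x" "x < n" "rk2 x < k"
    then show False using k by (auto simp: Ob_def rk2_def rot_def mid_def hi_def)
  qed
  have "(p/(1-p))^m * (1/2) \<le> (p/(1-p))^m * (pr t Ob - E / real (m+1))"
    using half p by (intro mult_left_mono) auto
  then have "(p/(1-p))^m * (1/2) \<le> 1 / real n" using fi by linarith
  from pow_bound[OF p _ _ this] have lnb: "ln (real n * (1/2)) \<le> real m * L"
    unfolding L_def using n by simp
  have "real m * L \<le> (4 * e b + 1) * L" using m2 L by (intro mult_right_mono) auto
  moreover have "4 * e b \<le> 16 * Tr * real k / real n"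
  proof -
    have "real n * e b \<le> 2 * real J * real k * e b" using Jk2 eb0 by (intro mult_right_mono) auto
    also have "\<dots> = 2 * real k * (real J * e b)" by (simp add: algebra_simps)
    also have "\<dots> \<le> 2 * real k * (2 * Tr)" using Jeb by (intro mult_left_mono) auto
    finally have "real n * e b \<le> 4 * Tr * real k" by (simp add: mult_ac)
    then show ?thesis using n by (simp add: field_simps)
  qed
  ultimately have "real m * L \<le> (16 * Tr * real k / real n + 1) * L"
    using L by (smt (verit) mult_right_mono)
  moreover have "Tr = (\<Sum>t. measure_pmf.prob (state_dist p n id s0 alg t) {s. is_Cmp (alg s)})"
    by (simp add: Tr_def a_def[abs_def] pr_def)
  ultimately show ?thesis using lnb by (simp add: L_def)
qed



lemma case2:
  fixes n k :: nat
  assumes p: "0 < p" "p < 1/2" and n: "n \<ge> 8" and k: "1 \<le> k" "k < n"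
    and sv: "solves_ft_min_whp p n k s0 alg"
    and sa: "summable (\<lambda>t. measure_pmf.prob (state_dist p n id s0 alg t) {s. is_Cmp (alg s)})"
  shows "ln (3 * real (n-k) / 8) \<le> (8 * real n * (\<Sum>t. measure_pmf.prob (state_dist p n id s0 alg t) {s. is_Cmp (alg s)}) / (3 * real (n-k)) + 1) * ln ((1-p)/p)"
proof -
  define pr where "pr t A = measure_pmf.prob (state_dist p n id s0 alg t) A" for t A
  define a where "a t = pr t {s. is_Cmp (alg s)}" for t
  define Tr where "Tr = suminf a"
  define L where "L = ln ((1-p)/p)"
  have L: "L > 0" using p unfolding L_def by (subst ln_gt_zero_iff) (auto simp: field_simps)
  have sa': "summable a" using sa by (simp add: a_def[abs_def] pr_def)
  have Tr0: "Tr \<ge> 0" unfolding Tr_def by (intro suminf_nonneg sa') (simp add: a_def pr_def)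
  define h where "h = n - k"
  have h: "h \<ge> 1" "k + h = n" using k by (auto simp: h_def)
  define Q where "Q = k div h + 1"
  have Qh: "Q * h \<le> n"
  proof -
    have 1: "(k div h) * h \<le> k" by (rule div_times_less_eq_dividend)
    have "Q * h = (k div h) * h + h" by (simp add: Q_def algebra_simps)
    then show ?thesis using 1 h by linarith
  qed
  define Oi where "Oi i = {s. \<exists>x. alg s = Out x \<and> i * h \<le> x \<and> x < i * h + h}" for i
  define G where "G = {s. \<exists>x. alg s = Out x \<and> x < n \<and> x < k}"
  obtain t where t: "pr t G \<ge> 3/4" using good_time[OF sv n] by (auto simp: pr_def G_def)
  have GU: "G \<subseteq> (\<Union>i\<in>{..<Q}. Oi i)"
  proof
    fix s assume "s \<in> G"
    then obtain x where x: "alg s = Out x" "x < k" by (auto simp: G_def)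
    define i where "i = x div h"
    have "i * h \<le> x" unfolding i_def by (rule div_times_less_eq_dividend)
    moreover have "x < i * h + h" unfolding i_def using h
      by (metis add.commute div_mult_mod_eq add_less_cancel_left mod_less_divisor less_le_trans zero_less_one)
    moreover have "i < Q" unfolding i_def Q_def using x(2) by (simp add: div_le_mono less_Suc_eq_le)
    ultimately show "s \<in> (\<Union>i\<in>{..<Q}. Oi i)" using x by (auto simp: Oi_def)
  qed
  have "pr t G \<le> pr t (\<Union>i\<in>{..<Q}. Oi i)"
    unfolding pr_def by (rule measure_pmf.finite_measure_mono[OF GU]) simp
  also have "\<dots> \<le> (\<Sum>i<Q. pr t (Oi i))"
    unfolding pr_def by (rule measure_pmf.finite_measure_subadditive_finite) auto
  finally have sumO: "3/4 \<le> (\<Sum>i<Q. pr t (Oi i))" using t by linarith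
  obtain i where i: "i < Q" "\<And>i'. i' < Q \<Longrightarrow> pr t (Oi i') \<le> pr t (Oi i)"
  proof -
    have "0 \<in> {..<Q}" by (simp add: Q_def)
    then have "{..<Q} \<noteq> {}" by blast
    then have "Max ((\<lambda>i. pr t (Oi i)) ` {..<Q}) \<in> (\<lambda>i. pr t (Oi i)) ` {..<Q}" by (intro Max_in) auto
    then obtain i where "i < Q" "pr t (Oi i) = Max ((\<lambda>i. pr t (Oi i)) ` {..<Q})" by auto
    then show ?thesis using that by auto
  qed
  have "(\<Sum>i<Q. pr t (Oi i)) \<le> real Q * pr t (Oi i)"
    using sum_bounded_above[of "{..<Q}" "\<lambda>i'. pr t (Oi i')" "pr t (Oi i)"] i(2) by simp
  then have QO: "3/4 \<le> real Q * pr t (Oi i)" using sumO by linarith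
  define A where "A = 3 * real h / (4 * real n)"
  have A0: "A > 0" using h n by (simp add: A_def)
  have OA: "pr t (Oi i) \<ge> A"
  proof -
    have "real Q * real h \<le> real n" using Qh by (metis of_nat_le_iff of_nat_mult)
    have "3/4 * real h \<le> real Q * pr t (Oi i) * real h" using QO h by (intro mult_right_mono) auto
    also have "\<dots> = (real Q * real h) * pr t (Oi i)" by (simp add: algebra_simps)
    also have "\<dots> \<le> real n * pr t (Oi i)" using \<open>real Q * real h \<le> real n\<close>
      by (intro mult_right_mono) (auto simp: pr_def)
    finally have "3/4 * real h \<le> real n * pr t (Oi i)" .
    then show ?thesis using n by (simp add: A_def field_simps)
  qed
  define lo where "lo = i * h"
  define mid where "mid = i * h + h"
  have midn: "mid \<le> n"
  proof -
    have "i \<le> k div h" using i(1) by (simp add: Q_def)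
    then have "i * h \<le> (k div h) * h" by simp
    also have "\<dots> \<le> k" by (rule div_times_less_eq_dividend)
    finally show ?thesis using h by (simp add: mid_def)
  qed
  define rk2 where "rk2 = rot lo mid n"
  have bij: "bij_betw rk2 {..<n} {..<n}" unfolding rk2_def by (rule rot_bij) (use midn in \<open>auto simp: lo_def mid_def\<close>)
  define E where "E = (\<Sum>t'<t. pr t' {s. dif n id rk2 alg s})"
  have ETr: "E \<le> Tr"
  proof -
    have "E \<le> (\<Sum>t'<t. a t')"
      unfolding E_def
    proof (intro sum_mono)
      fix t' show "pr t' {s. dif n id rk2 alg s} \<le> a t'"
        unfolding pr_def a_def using dif_cmp
        by (intro measure_pmf.finite_measure_mono) auto
    qed
    also have "\<dots> \<le> Tr" unfolding Tr_def by (rule sum_le_suminf[OF sa']) (auto simp: a_def pr_def)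
    finally show ?thesis .
  qed
  define m where "m = nat \<lceil>2 * Tr / A\<rceil>"
  have m1: "2 * Tr / A \<le> real m" unfolding m_def by linarith
  have d0: "0 \<le> 2 * Tr / A" using Tr0 A0 by simp
  have m2: "real m < 2 * Tr / A + 1" unfolding m_def using d0 by linarith
  have "E / real (m+1) \<le> A / 2"
  proof -
    have "2 * Tr \<le> real m * A" using m1 A0 by (simp add: field_simps)
    then have "2 * E \<le> real (m+1) * A" using ETr A0 by (simp add: algebra_simps)
    then show ?thesis by (simp add: field_simps)
  qed
  then have half: "A/2 \<le> pr t (Oi i) - E / real (m+1)" using OA by linarith
  have fi: "(p/(1-p))^m * (pr t (Oi i) - E / real (m+1)) \<le> 1 / real n"
    unfolding pr_def E_def
  proof (rule final_ineq[OF p bij sv])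
    show "\<And>s. s \<in> Oi i \<Longrightarrow> \<not> is_Cmp (alg s)" by (auto simp: Oi_def)
    fix s x assume "s \<in> Oi i" "alg s = Out x" "x < n" "rk2 x < k"
    then show False using h by (auto simp: Oi_def rk2_def rot_def lo_def mid_def)
  qed
  have "(p/(1-p))^m * (A/2) \<le> (p/(1-p))^m * (pr t (Oi i) - E / real (m+1))"
    using half p by (intro mult_left_mono) auto
  then have "(p/(1-p))^m * (A/2) \<le> 1 / real n" using fi by linarith
  from pow_bound[OF p _ _ this] have lnb: "ln (real n * (A/2)) \<le> real m * L"
    unfolding L_def using n A0 by simp
  have eqA: "real n * (A/2) = 3 * real (n-k) / 8" using n by (simp add: A_def h_def field_simps)
  have "ln (3 * real (n-k) / 8) \<le> real m * L" using lnb unfolding eqA .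
  also have "\<dots> \<le> (2 * Tr / A + 1) * L" using m2 L by (intro mult_right_mono) auto
  also have "2 * Tr / A = 8 * real n * Tr / (3 * real (n-k))" using n h by (simp add: A_def h_def field_simps)
  also have "Tr = (\<Sum>t. measure_pmf.prob (state_dist p n id s0 alg t) {s. is_Cmp (alg s)})"
    by (simp add: Tr_def a_def[abs_def] pr_def)
  finally show ?thesis by (simp add: L_def)
qed



lemma lin_aux:
  fixes a1 b1 x1 u1 v1 e1 y1 z1 :: real
  shows "a1 \<le> b1 \<Longrightarrow> a1 = x1 - u1 \<Longrightarrow> u1 \<le> v1 \<Longrightarrow> e1 = y1 + z1 \<Longrightarrow> 2 * z1 + 2 * v1 \<le> x1 \<Longrightarrow> b1 \<le> e1 \<Longrightarrow> x1 / 2 \<le> y1"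
  by linarith

lemma main_bound:
  fixes n k :: nat and p c :: real
  assumes p: "0 < p" "p < 1/2" and c: "0 < c" "c < 1"
    and n: "n \<ge> 8" and lnn: "ln (real n) \<ge> 2 * ln ((1-p)/p) + 2 * ln (8/(1-c))"
    and k: "1 \<le> k" "real k \<le> c * real n"
    and sv: "solves_ft_min_whp p n k s0 alg"
  shows "ennreal ((1-c)/(64 * ln ((1-p)/p)) * (real n / real k) * ln (real n)) \<le> expected_comparisons p n id s0 alg"
proof (cases "expected_comparisons p n id s0 alg = top")
  case True
  then show ?thesis by simp
next
  case False
  define a where "a = (\<lambda>t. measure_pmf.prob (state_dist p n id s0 alg t) {s. is_Cmp (alg s)})"
  have sa: "summable a" unfolding a_def
    using False by (intro summable_suminf_not_top) (auto simp: expected_comparisons_def)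
  define Tr where "Tr = suminf a"
  have Tr0: "Tr \<ge> 0" unfolding Tr_def by (intro suminf_nonneg sa) (simp add: a_def)
  have Teq: "expected_comparisons p n id s0 alg = ennreal Tr"
    unfolding expected_comparisons_def Tr_def a_def by (rule suminf_ennreal2) (use sa in \<open>auto simp: a_def\<close>)
  define L where "L = ln ((1-p)/p)"
  have L: "L > 0" using p unfolding L_def by (subst ln_gt_zero_iff) (auto simp: field_simps)
  define l8 where "l8 = ln (8/(1-c))"
  have l82: "ln 2 \<le> l8" unfolding l8_def using c by (subst ln_le_cancel_iff) (auto simp: field_simps)
  have n0: "real n > 0" using n by simp
  have lnn0: "ln (real n) \<ge> 0" using n by simp
  have kn: "k < n"
  proof -
    have "c * real n < real n" using c n0 by simp
    then show ?thesis using k by linarith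
  qed
  have k0: "real k > 0" using k by simp
  have key: "(1-c) * ln (real n) * real n \<le> 64 * L * real k * Tr"
  proof (cases "4 * k \<le> n")
    case True
    have c1: "ln (real n / 2) \<le> (16 * Tr * real k / real n + 1) * L"
      using case1[OF p n k(1) True sv] sa by (simp add: Tr_def a_def L_def)
    have "ln (real n / 2) = ln (real n) - ln 2" using n0 by (simp add: ln_div)
    moreover have "(16 * Tr * real k / real n + 1) * L = 16 * Tr * real k / real n * L + L"
      by (simp add: algebra_simps)
    moreover have "2 * L + 2 * l8 \<le> ln (real n)" using lnn by (simp add: L_def l8_def)
    ultimately have "ln (real n) / 2 \<le> 16 * Tr * real k / real n * L"
      using c1 l82 by linarith
    then have "ln (real n) / 2 * real n \<le> 16 * Tr * real k * L"
      using n0 by (simp add: field_simps)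
    then have A: "ln (real n) * real n \<le> 32 * L * real k * Tr" by (simp add: algebra_simps)
    have "(1-c) * (ln (real n) * real n) \<le> ln (real n) * real n"
      using c lnn0 n0 by (intro mult_left_le_one_le) auto
    then have "(1-c) * ln (real n) * real n \<le> ln (real n) * real n" by (simp add: mult.assoc)
    moreover have "32 * L * real k * Tr \<le> 64 * L * real k * Tr" using L k0 Tr0 by simp
    ultimately show ?thesis using A by linarith
  next
    case False
    have c2: "ln (3 * real (n-k) / 8) \<le> (8 * real n * Tr / (3 * real (n-k)) + 1) * L"
      using case2[OF p n k(1) kn sv] sa by (simp add: Tr_def a_def L_def)
    have hpos: "real (n-k) > 0" using kn by simp
    have hge: "real (n-k) \<ge> (1-c) * real n" using k kn by (simp add: of_nat_diff algebra_simps)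
    have "ln (3 * ((1-c) * real n) / 8) \<le> ln (3 * real (n-k) / 8)"
      using hge c n0 hpos by (subst ln_le_cancel_iff) (auto simp: mult.commute)
    moreover have "ln (3 * ((1-c) * real n) / 8) = ln (real n) - ln (8 / (3 * (1-c)))"
    proof -
      have "3 * ((1-c) * real n) / 8 = real n / (8 / (3 * (1-c)))" using c by (simp add: field_simps)
      moreover have "ln (real n / (8 / (3 * (1-c)))) = ln (real n) - ln (8 / (3 * (1-c)))"
        using c n0 by (intro ln_divide_pos) auto
      ultimately show ?thesis by (simp only:)
    qed
    moreover have "ln (8 / (3 * (1-c))) \<le> l8"
      unfolding l8_def using c by (subst ln_le_cancel_iff) (auto simp: field_simps)
    moreover have "(8 * real n * Tr / (3 * real (n-k)) + 1) * L = 8 * real n * Tr / (3 * real (n-k)) * L + L"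
      by (simp add: algebra_simps)
    moreover have "2 * L + 2 * l8 \<le> ln (real n)" using lnn by (simp add: L_def l8_def)
    ultimately have "ln (real n) / 2 \<le> 8 * real n * Tr / (3 * real (n-k)) * L"
      using c2 by (rule lin_aux)
    then have "ln (real n) / 2 * (3 * real (n-k)) \<le> 8 * real n * Tr * L"
      using hpos by (simp add: field_simps)
    then have B: "3 * real (n-k) * ln (real n) \<le> 16 * real n * Tr * L" by (simp add: algebra_simps)
    have "3 * ((1-c) * real n) * ln (real n) \<le> 3 * real (n-k) * ln (real n)"
      using hge lnn0 by (intro mult_right_mono) auto
    then have "3 * (1-c) * ln (real n) * real n \<le> 16 * Tr * L * real n" using B by (simp add: algebra_simps)
    then have C3': "3 * (1-c) * ln (real n) \<le> 16 * Tr * L" using n0 by simp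
    have C3: "(1-c) * ln (real n) \<le> 16 * Tr * L / 3" using C3' by (simp add: field_simps)
    have nk: "real n \<le> 4 * real k" using False by linarith
    have "(1-c) * ln (real n) * real n \<le> (1-c) * ln (real n) * (4 * real k)"
      using nk c lnn0 by (intro mult_left_mono) auto
    also have "\<dots> = 4 * real k * ((1-c) * ln (real n))" by (simp add: algebra_simps)
    also have "\<dots> \<le> 4 * real k * (16 * Tr * L / 3)" using C3 k0 by (intro mult_left_mono) auto
    also have "\<dots> \<le> 64 * L * real k * Tr" using L k0 Tr0 by (simp add: algebra_simps)
    finally show ?thesis .
  qed
  have "(1-c)/(64 * L) * (real n / real k) * ln (real n) = ((1-c) * ln (real n) * real n) / (64 * L * real k)"
    by (simp add: field_simps)
  also have "\<dots> \<le> Tr" using key L k0 by (simp add: divide_le_eq mult_ac)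
  finally show ?thesis unfolding Teq L_def[symmetric] by (rule ennreal_leI)
qed

theorem corollary4:
  fixes p c :: real
  assumes "0 < p" and "p < 1/2" and "0 < c" and "c < 1"
  shows "\<exists>C > 0. \<exists>N. \<forall>n k s0 alg.
           n \<ge> N \<longrightarrow> 1 \<le> k \<longrightarrow> real k \<le> c * real n \<longrightarrow>
           solves_ft_min_whp p n k s0 alg \<longrightarrow>
           (\<exists>rk. bij_betw rk {..<n} {..<n} \<and>
              ennreal (C * (real n / real k) * ln (real n))
                \<le> expected_comparisons p n rk s0 alg)"
proof -
  define L where "L = ln ((1-p)/p)"
  have L: "L > 0" using assms unfolding L_def by (subst ln_gt_zero_iff) (auto simp: field_simps)
  define X where "X = 2 * L + 2 * ln (8/(1-c))"
  define N where "N = nat \<lceil>exp X\<rceil> + 8"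
  show ?thesis
  proof (intro exI[of _ "(1-c)/(64 * L)"] conjI exI[of _ N] allI impI)
    show "(1-c)/(64 * L) > 0" using L assms by simp
    fix n k :: nat and s0 alg
    assume n: "N \<le> n" and k: "1 \<le> k" "real k \<le> c * real n" and sv: "solves_ft_min_whp p n k s0 alg"
    have n8: "n \<ge> 8" using n by (simp add: N_def)
    have "exp X \<le> real n" using n unfolding N_def by linarith
    then have "ln (exp X) \<le> ln (real n)" using n8 by (subst ln_le_cancel_iff) auto
    then have "X \<le> ln (real n)" by simp
    then have lnn: "ln (real n) \<ge> 2 * ln ((1-p)/p) + 2 * ln (8/(1-c))" by (simp add: X_def L_def)
    show "\<exists>rk. bij_betw rk {..<n} {..<n} \<and>
        ennreal ((1-c)/(64 * L) * (real n / real k) * ln (real n)) \<le> expected_comparisons p n rk s0 alg"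
      using main_bound[OF assms n8 lnn k sv] by (intro exI[of _ id]) (simp add: L_def)
  qed
qed


end
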